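(* Let $n\ge3$, let $S_n$ act on $V=\mathbb{C}^n$ by permutations, fix $a,b,c\in\mathbb{C}$, let $*\in\{L,C\}$, let $g$ be a $5$-cycle, and let $\phi^*_g$ be the $g$-component of $\phi(\kappa^*_{\mathrm{tri}},\kappa^L_{\mathrm{tri}})$. Then $\phi^C_g\equiv0$. Moreover, if $e_i\in V^g$ then $\phi^L_g(e_i,e_j,e_k)=0$ for all $j,k$, and for $1\leq i\leq n$, $$\phi^L_g(e_i,ge_i,g^2e_i)=2(a-b)^2\big(e_i+ge_i-g^2e_i-g^3e_i\big),$$ $$\phi^L_g(e_i,ge_i,g^3e_i)=2(a-b)^2\big(-2e_i+2g^2e_i+g^3e_i-g^4e_i\big).$$
   Context: $S_n$ acts by $\sigma e_i=e_{\sigma(i)}$; $V^g$ is the fixed space of $g$. $\kappa^L_{\mathrm{tri}}$ is the linear 2-cochain supported on 3-cycles with $\kappa^L_{(ijk)}(e_i,e_j)=\kappa^L_{(ijk)}(e_j,e_k)=\kappa^L_{(ijk)}(e_k,e_i)=a(e_i+e_j+e_k)+b\sum_{l\notin\{i,j,k\}}e_l$ and $\kappa^L_{(ijk)}(e_l,e_m)=0$ whenever $e_l$ or $e_m$ lies in $V^{(ijk)}$; $\kappa^C_{\mathrm{tri}}$ is the constant 2-cochain supported on 3-cycles with $\kappa^C_{(ijk)}(e_i,e_j)=\kappa^C_{(ijk)}(e_j,e_k)=\kappa^C_{(ijk)}(e_k,e_i)=c$ and $\kappa^C_{(ijk)}(e_l,e_m)=0$ whenever $e_l$ or $e_m$ lies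 in $V^{(ijk)}$. For $\alpha$ linear or constant and $\beta$ linear, $\phi(\alpha,\beta)=\sum_g\phi_gg$, $\phi_g=\sum_{xy=g}\phi_{x,y}$, $\phi_{x,y}(v_1,v_2,v_3)=\alpha_x(v_1+yv_1,\beta_y(v_2,v_3))+\alpha_x(v_2+yv_2,\beta_y(v_3,v_1))+\alpha_x(v_3+yv_3,\beta_y(v_1,v_2))$. *)

theory Defs
  imports "HOL-Combinatorics.Combinatorics"
begin

(* V = C^n with basis indexed by the finite type 'n; vectors are 'n => complex *)

definition basis :: "'n \<Rightarrow> ('n \<Rightarrow> complex)" where
  "basis i = (\<lambda>l. if l = i then 1 else 0)"

(* permutation action: sigma e_i = e_(sigma i) *)
definition pact :: "('n \<Rightarrow> 'n) \<Rightarrow> ('n \<Rightarrow> complex) \<Rightarrow> ('n \<Rightarrow> complex)" where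
  "pact \<sigma> v = (\<lambda>l. v (inv \<sigma> l))"

definition vadd :: "('n \<Rightarrow> complex) \<Rightarrow> ('n \<Rightarrow> complex) \<Rightarrow> ('n \<Rightarrow> complex)" where
  "vadd u v = (\<lambda>l. u l + v l)"

definition vsub :: "('n \<Rightarrow> complex) \<Rightarrow> ('n \<Rightarrow> complex) \<Rightarrow> ('n \<Rightarrow> complex)" where
  "vsub u v = (\<lambda>l. u l - v l)"

definition smul :: "complex \<Rightarrow> ('n \<Rightarrow> complex) \<Rightarrow> ('n \<Rightarrow> complex)" where
  "smul c v = (\<lambda>l. c * v l)"

definition is_3cycle :: "('n \<Rightarrow> 'n) \<Rightarrow> bool" where
  "is_3cycle g \<longleftrightarrow> (\<exists>i j k. distinct [i, j, k] \<and> g = cycle_of_list [i, j, k])"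

definition is_5cycle :: "('n \<Rightarrow> 'n) \<Rightarrow> bool" where
  "is_5cycle g \<longleftrightarrow> (\<exists>cs. length cs = 5 \<and> distinct cs \<and> g = cycle_of_list cs)"

(* values of kappa^L_tri on basis pairs (e_l, e_m); for g = (i j k) the value on
   (e_i,e_j),(e_j,e_k),(e_k,e_i) is a(e_i+e_j+e_k) + b sum_{others} e_l; extended
   alternatingly; zero if e_l or e_m fixed by g; zero for g not a 3-cycle. *)
definition kL_basis :: "complex \<Rightarrow> complex \<Rightarrow> ('n \<Rightarrow> 'n) \<Rightarrow> 'n \<Rightarrow> 'n \<Rightarrow> ('n \<Rightarrow> complex)" where
  "kL_basis a b g l m =
     (if is_3cycle g \<and> g l \<noteq> l \<and> g m \<noteq> m then
        (let w = (\<lambda>p. if g p \<noteq> p then a else b) in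
          if m = g l then w else if l = g m then (\<lambda>p. - w p) else (\<lambda>p. 0))
      else (\<lambda>p. 0))"

definition kC_basis :: "complex \<Rightarrow> ('n \<Rightarrow> 'n) \<Rightarrow> 'n \<Rightarrow> 'n \<Rightarrow> complex" where
  "kC_basis c g l m =
     (if is_3cycle g \<and> g l \<noteq> l \<and> g m \<noteq> m then
        (if m = g l then c else if l = g m then - c else 0)
      else 0)"

definition kappaL :: "complex \<Rightarrow> complex \<Rightarrow> ('n::finite \<Rightarrow> 'n) \<Rightarrow> ('n \<Rightarrow> complex) \<Rightarrow> ('n \<Rightarrow> complex) \<Rightarrow> ('n \<Rightarrow> complex)" where
  "kappaL a b g u v = (\<lambda>p. \<Sum>l\<in>UNIV. \<Sum>m\<in>UNIV. u l * v m * kL_basis a b g l m p)"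

definition kappaC :: "complex \<Rightarrow> ('n::finite \<Rightarrow> 'n) \<Rightarrow> ('n \<Rightarrow> complex) \<Rightarrow> ('n \<Rightarrow> complex) \<Rightarrow> complex" where
  "kappaC c g u v = (\<Sum>l\<in>UNIV. \<Sum>m\<in>UNIV. u l * v m * kC_basis c g l m)"

(* phi_{x,y} for alpha = kappa^L_tri resp. kappa^C_tri, beta = kappa^L_tri *)
definition phiL_xy :: "complex \<Rightarrow> complex \<Rightarrow> ('n::finite \<Rightarrow> 'n) \<Rightarrow> ('n \<Rightarrow> 'n) \<Rightarrow>
    ('n \<Rightarrow> complex) \<Rightarrow> ('n \<Rightarrow> complex) \<Rightarrow> ('n \<Rightarrow> complex) \<Rightarrow> ('n \<Rightarrow> complex)" where
  "phiL_xy a b x y v1 v2 v3 =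
     vadd (vadd (kappaL a b x (vadd v1 (pact y v1)) (kappaL a b y v2 v3))
                (kappaL a b x (vadd v2 (pact y v2)) (kappaL a b y v3 v1)))
          (kappaL a b x (vadd v3 (pact y v3)) (kappaL a b y v1 v2))"

definition phiC_xy :: "complex \<Rightarrow> complex \<Rightarrow> complex \<Rightarrow> ('n::finite \<Rightarrow> 'n) \<Rightarrow> ('n \<Rightarrow> 'n) \<Rightarrow>
    ('n \<Rightarrow> complex) \<Rightarrow> ('n \<Rightarrow> complex) \<Rightarrow> ('n \<Rightarrow> complex) \<Rightarrow> complex" where
  "phiC_xy a b c x y v1 v2 v3 =
       kappaC c x (vadd v1 (pact y v1)) (kappaL a b y v2 v3)
     + kappaC c x (vadd v2 (pact y v2)) (kappaL a b y v3 v1)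
     + kappaC c x (vadd v3 (pact y v3)) (kappaL a b y v1 v2)"

definition factorizations :: "('n \<Rightarrow> 'n) \<Rightarrow> (('n \<Rightarrow> 'n) \<times> ('n \<Rightarrow> 'n)) set" where
  "factorizations g = {(x, y). x permutes UNIV \<and> y permutes UNIV \<and> x \<circ> y = g}"

definition phiL :: "complex \<Rightarrow> complex \<Rightarrow> ('n::finite \<Rightarrow> 'n) \<Rightarrow>
    ('n \<Rightarrow> complex) \<Rightarrow> ('n \<Rightarrow> complex) \<Rightarrow> ('n \<Rightarrow> complex) \<Rightarrow> ('n \<Rightarrow> complex)" where
  "phiL a b g v1 v2 v3 = (\<lambda>p. \<Sum>(x, y)\<in>factorizations g. phiL_xy a b x y v1 v2 v3 p)"

definition phiC :: "complex \<Rightarrow> complex \<Rightarrow> complex \<Rightarrow> ('n::finite \<Rightarrow> 'n) \<Rightarrow>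
    ('n \<Rightarrow> complex) \<Rightarrow> ('n \<Rightarrow> complex) \<Rightarrow> ('n \<Rightarrow> complex) \<Rightarrow> complex" where
  "phiC a b c g v1 v2 v3 = (\<Sum>(x, y)\<in>factorizations g. phiC_xy a b c x y v1 v2 v3)"

end

theory Submission
  imports Defs
begin

definition cyc3 :: "'n \<Rightarrow> 'n \<Rightarrow> 'n \<Rightarrow> 'n \<Rightarrow> 'n" where
  "cyc3 p q r = (\<lambda>z. if z = p then q else if z = q then r else if z = r then p else z)"

lemma cyc3_eq: "distinct [p,q,r] \<Longrightarrow> cycle_of_list [p,q,r] = cyc3 p q r"
  by (auto simp: fun_eq_iff cyc3_def Transposition.transpose_def)

lemma cyc3_rot: "distinct [p,q,r] \<Longrightarrow> cyc3 p q r = cyc3 q r p"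
  by (auto simp: fun_eq_iff cyc3_def)

lemma cyc3_permutes: "distinct [p,q,r] \<Longrightarrow> cyc3 p q r permutes UNIV"
  by (metis cyc3_eq cycle_permutes permutes_subset subset_UNIV)

lemma inv_cyc3: "distinct [p,q,r] \<Longrightarrow> inv (cyc3 p q r) = cyc3 r q p"
  by (rule inv_unique_comp) (auto simp: fun_eq_iff cyc3_def)

lemma is3_cyc3: "distinct [p,q,r] \<Longrightarrow> is_3cycle (cyc3 p q r)"
  unfolding is_3cycle_def by (metis cyc3_eq)

lemma is3_E: "is_3cycle x \<Longrightarrow> \<exists>p q r. distinct [p,q,r] \<and> x = cyc3 p q r"
  unfolding is_3cycle_def by (metis cyc3_eq)

lemma pact_basis: "bij s \<Longrightarrow> pact s (basis i) = basis (s i)"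
proof -
  assume b: "bij s"
  have "inv s l = i \<longleftrightarrow> l = s i" for l
    using b by (metis bij_inv_eq_iff)
  then show ?thesis by (auto simp: fun_eq_iff pact_def basis_def)
qed

definition Om :: "'n \<Rightarrow> 'n \<Rightarrow> 'n \<Rightarrow> ('n \<Rightarrow> complex) \<Rightarrow> ('n \<Rightarrow> complex) \<Rightarrow> complex" where
  "Om p q r u v = u p * v q - u q * v p + u q * v r - u r * v q + u r * v p - u p * v r"

definition W :: "complex \<Rightarrow> complex \<Rightarrow> 'n \<Rightarrow> 'n \<Rightarrow> 'n \<Rightarrow> 'n \<Rightarrow> complex" where
  "W a b p q r z = (if z = p \<or> z = q \<or> z = r then a else b)"

lemma dist3: "distinct [p,q,r] \<Longrightarrow> p \<noteq> q \<and> p \<noteq> r \<and> q \<noteq> r \<and> q \<noteq> p \<and> r \<noteq> p \<and> r \<noteq> q"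
  by auto

lemma sum2_restrict:
  fixes F :: "'n::finite \<Rightarrow> 'n \<Rightarrow> complex"
  assumes "\<And>l m. F l m \<noteq> 0 \<Longrightarrow> l \<in> S \<and> m \<in> S"
  shows "(\<Sum>l\<in>UNIV. \<Sum>m\<in>UNIV. F l m) = (\<Sum>l\<in>S. \<Sum>m\<in>S. F l m)"
proof -
  have "(\<Sum>l\<in>UNIV. \<Sum>m\<in>UNIV. F l m) = (\<Sum>l\<in>UNIV. \<Sum>m\<in>S. F l m)"
    by (rule sum.cong[OF refl], rule sum.mono_neutral_right) (use assms in auto)
  also have "\<dots> = (\<Sum>l\<in>S. \<Sum>m\<in>S. F l m)"
    by (rule sum.mono_neutral_right) (use assms in \<open>auto intro!: sum.neutral\<close>)
  finally show ?thesis .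
qed

lemma kL_cyc3:
  assumes "distinct [p,q,r]"
  shows "kL_basis a b (cyc3 p q r) l m z =
    (if l = p \<and> m = q \<or> l = q \<and> m = r \<or> l = r \<and> m = p then W a b p q r z
     else if l = q \<and> m = p \<or> l = r \<and> m = q \<or> l = p \<and> m = r then - W a b p q r z else 0)"
  using assms is3_cyc3[OF assms] by (auto simp: kL_basis_def cyc3_def W_def Let_def)

lemma kC_cyc3:
  assumes "distinct [p,q,r]"
  shows "kC_basis c (cyc3 p q r) l m =
    (if l = p \<and> m = q \<or> l = q \<and> m = r \<or> l = r \<and> m = p then c
     else if l = q \<and> m = p \<or> l = r \<and> m = q \<or> l = p \<and> m = r then - c else 0)"
  using assms is3_cyc3[OF assms] by (auto simp: kC_basis_def cyc3_def)

lemma kappaL_cyc3: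
  assumes "distinct [p,q,r]"
  shows "kappaL a b (cyc3 p q r) u v = (\<lambda>z. Om p q r u v * W a b p q r z)"
proof
  fix z
  have "kappaL a b (cyc3 p q r) u v z = (\<Sum>l\<in>{p,q,r}. \<Sum>m\<in>{p,q,r}. u l * v m * kL_basis a b (cyc3 p q r) l m z)"
    unfolding kappaL_def by (rule sum2_restrict) (auto simp: kL_cyc3[OF assms] split: if_splits)
  also have "\<dots> = Om p q r u v * W a b p q r z"
    using dist3[OF assms] by (simp add: kL_cyc3[OF assms] Om_def algebra_simps insert_commute)
  finally show "kappaL a b (cyc3 p q r) u v z = Om p q r u v * W a b p q r z" .
qed

lemma kappaC_cyc3:
  assumes "distinct [p,q,r]"
  shows "kappaC c (cyc3 p q r) u v = c * Om p q r u v"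
proof -
  have "kappaC c (cyc3 p q r) u v = (\<Sum>l\<in>{p,q,r}. \<Sum>m\<in>{p,q,r}. u l * v m * kC_basis c (cyc3 p q r) l m)"
    unfolding kappaC_def by (rule sum2_restrict) (auto simp: kC_cyc3[OF assms] split: if_splits)
  also have "\<dots> = c * Om p q r u v"
    using dist3[OF assms] by (simp add: kC_cyc3[OF assms] Om_def algebra_simps insert_commute)
  finally show ?thesis .
qed

lemma kappaL_non3: "\<not> is_3cycle x \<Longrightarrow> kappaL a b x u v = (\<lambda>z. 0)"
  by (simp add: kappaL_def kL_basis_def)
lemma kappaC_non3: "\<not> is_3cycle x \<Longrightarrow> kappaC c x u v = 0"
  by (simp add: kappaC_def kC_basis_def)

definition cyc5 :: "'n \<Rightarrow> 'n \<Rightarrow> 'n \<Rightarrow> 'n \<Rightarrow> 'n \<Rightarrow> 'n \<Rightarrow> 'n" where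
  "cyc5 d0 d1 d2 d3 d4 = (\<lambda>z. if z = d0 then d1 else if z = d1 then d2 else if z = d2 then d3
     else if z = d3 then d4 else if z = d4 then d0 else z)"

lemma cyc5_eq: "distinct [d0,d1,d2,d3,d4] \<Longrightarrow> cycle_of_list [d0,d1,d2,d3,d4] = cyc5 d0 d1 d2 d3 d4"
  by (auto simp: fun_eq_iff cyc5_def Transposition.transpose_def)

lemma rot_first:
  assumes "distinct [p,q,r]" "z \<in> {p,q,r}"
  shows "\<exists>j k. cyc3 p q r = cyc3 z j k \<and> {p,q,r} = {z,j,k} \<and> distinct [z,j,k]"
proof -
  have r1: "cyc3 p q r = cyc3 q r p" "cyc3 q r p = cyc3 r p q" using assms(1) cyc3_rot[of p q r] cyc3_rot[of q r p] by auto
  have "z = p \<or> z = q \<or> z = r" using assms(2) by auto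
  then show ?thesis
  proof (elim disjE)
    assume "z = p" then show ?thesis using assms(1) by (intro exI[of _ q] exI[of _ r]) auto
  next
    assume "z = q" then show ?thesis using assms(1) r1 by (intro exI[of _ r] exI[of _ p]) auto
  next
    assume "z = r" then show ?thesis using assms(1) r1 by (intro exI[of _ p] exI[of _ q]) auto
  qed
qed

lemma rot_last:
  assumes "distinct [p,q,r]" "z \<in> {p,q,r}"
  shows "\<exists>j k. cyc3 p q r = cyc3 j k z \<and> {p,q,r} = {j,k,z} \<and> distinct [j,k,z]"
proof -
  have r1: "cyc3 p q r = cyc3 q r p" "cyc3 q r p = cyc3 r p q" using assms(1) cyc3_rot[of p q r] cyc3_rot[of q r p] by auto
  have "z = p \<or> z = q \<or> z = r" using assms(2) by auto
  then show ?thesis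
  proof (elim disjE)
    assume "z = p" then show ?thesis using assms(1) r1 by (intro exI[of _ q] exI[of _ r]) auto
  next
    assume "z = q" then show ?thesis using assms(1) r1 by (intro exI[of _ r] exI[of _ p]) auto
  next
    assume "z = r" then show ?thesis using assms(1) r1 by (intro exI[of _ p] exI[of _ q]) auto
  qed
qed

lemma classify:
  assumes dd: "distinct [d0,d1,d2,d3,d4]" and x3: "is_3cycle x" and y3: "is_3cycle y"
    and xy: "x \<circ> y = cyc5 d0 d1 d2 d3 d4"
  shows "(x,y) \<in> {(cyc3 d3 d4 d0, cyc3 d0 d1 d2), (cyc3 d4 d0 d1, cyc3 d1 d2 d3),
     (cyc3 d0 d1 d2, cyc3 d2 d3 d4), (cyc3 d1 d2 d3, cyc3 d3 d4 d0), (cyc3 d2 d3 d4, cyc3 d4 d0 d1)}"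
proof -
  let ?G = "cyc5 d0 d1 d2 d3 d4"
  define D where "D = {d0,d1,d2,d3,d4}"
  have cD: "card D = 5" using dd unfolding D_def by (simp add: distinct_card[symmetric])
  have mv: "?G z \<noteq> z \<Longrightarrow> z \<in> D" for z by (auto simp: cyc5_def D_def split: if_splits)
  have mvD: "z \<in> D \<Longrightarrow> ?G z \<noteq> z" for z using dd by (auto simp: cyc5_def D_def)
  obtain p q r where pqr: "distinct [p,q,r]" "x = cyc3 p q r" using is3_E[OF x3] by blast
  obtain i j k where ijk: "distinct [i,j,k]" "y = cyc3 i j k" using is3_E[OF y3] by blast
  have Dsub: "D \<subseteq> {p,q,r} \<union> {i,j,k}"
  proof
    fix z assume "z \<in> D"
    then have "x (y z) \<noteq> z" using mvD xy by (metis comp_apply)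
    then show "z \<in> {p,q,r} \<union> {i,j,k}" using pqr ijk by (auto simp: cyc3_def split: if_splits)
  qed
  have "{p,q,r} \<inter> {i,j,k} \<noteq> {}"
  proof
    assume dis: "{p,q,r} \<inter> {i,j,k} = {}"
    have "z \<in> D" if "z \<in> set [p,q,r,i,j,k]" for z
    proof -
      have "x (y z) \<noteq> z" using that dis pqr ijk by (auto simp: cyc3_def)
      then show ?thesis using mv xy by (metis comp_apply)
    qed
    then have "card (set [p,q,r,i,j,k]) \<le> card D" by (intro card_mono) (auto simp: D_def)
    moreover have "distinct [p,q,r,i,j,k]" using dis pqr ijk by auto
    ultimately show False using cD by (simp only: distinct_card) simp
  qed
  then obtain z0 where z0: "z0 \<in> {p,q,r}" "z0 \<in> {i,j,k}" by blast
  obtain p' q' where P: "x = cyc3 p' q' z0" "{p,q,r} = {p',q',z0}" "distinct [p',q',z0]"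
    using rot_last[OF pqr(1) z0(1)] pqr(2) by blast
  obtain j' k' where J: "y = cyc3 z0 j' k'" "{i,j,k} = {z0,j',k'}" "distinct [z0,j',k']"
    using rot_first[OF ijk(1) z0(2)] ijk(2) by blast
  have "D \<subseteq> set [p',q',z0,j',k']" using Dsub P J by auto
  then have "card D \<le> card (set [p',q',z0,j',k'])" by (intro card_mono) auto
  then have "card (set [p',q',z0,j',k']) = length [p',q',z0,j',k']"
    using cD card_length[of "[p',q',z0,j',k']"] by simp
  then have dl: "distinct [p',q',z0,j',k']" by (rule card_distinct)
  have G1: "?G z0 = j'" "?G j' = k'" "?G k' = p'" "?G p' = q'"
  proof -
    have e: "x (y t) = ?G t" for t using xy by (metis comp_apply)
    show "?G z0 = j'" using e[of z0] dl P(1) J(1) by (auto simp: cyc3_def)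
    show "?G j' = k'" using e[of j'] dl P(1) J(1) by (auto simp: cyc3_def)
    show "?G k' = p'" using e[of k'] dl P(1) J(1) by (auto simp: cyc3_def)
    show "?G p' = q'" using e[of p'] dl P(1) J(1) by (auto simp: cyc3_def)
  qed
  have "z0 \<in> D" using mv G1(1) dl by auto
  then have "z0 = d0 \<or> z0 = d1 \<or> z0 = d2 \<or> z0 = d3 \<or> z0 = d4" unfolding D_def by auto
  moreover have Gd: "?G d0 = d1" "?G d1 = d2" "?G d2 = d3" "?G d3 = d4" "?G d4 = d0"
    using dd by (auto simp: cyc5_def)
  ultimately show ?thesis
  proof (elim disjE)
    assume "z0 = d0" then show ?thesis using G1 Gd P(1) J(1) by auto
  next
    assume "z0 = d1" then show ?thesis using G1 Gd P(1) J(1) by auto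
  next
    assume "z0 = d2" then show ?thesis using G1 Gd P(1) J(1) by auto
  next
    assume "z0 = d3" then show ?thesis using G1 Gd P(1) J(1) by auto
  next
    assume "z0 = d4" then show ?thesis using G1 Gd P(1) J(1) by auto
  qed
qed

lemma Om_smul: "Om p q r u (\<lambda>z. s * f z) = s * Om p q r u f"
  by (simp add: Om_def algebra_simps)

definition Ps :: "complex \<Rightarrow> complex \<Rightarrow> 'n \<Rightarrow> 'n \<Rightarrow> 'n \<Rightarrow> 'n \<Rightarrow> 'n \<Rightarrow> 'n \<Rightarrow>
   ('n \<Rightarrow> complex) \<Rightarrow> ('n \<Rightarrow> complex) \<Rightarrow> ('n \<Rightarrow> complex) \<Rightarrow> complex" where
  "Ps a b p q r i j k v1 v2 v3 =
     Om i j k v2 v3 * Om p q r (\<lambda>l. v1 l + v1 (cyc3 k j i l)) (W a b i j k)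
   + Om i j k v3 v1 * Om p q r (\<lambda>l. v2 l + v2 (cyc3 k j i l)) (W a b i j k)
   + Om i j k v1 v2 * Om p q r (\<lambda>l. v3 l + v3 (cyc3 k j i l)) (W a b i j k)"

lemma pact_cyc3: "distinct [i,j,k] \<Longrightarrow> pact (cyc3 i j k) v = (\<lambda>l. v (cyc3 k j i l))"
  by (simp add: pact_def inv_cyc3)

lemma phiL_xy_cyc3:
  assumes "distinct [p,q,r]" "distinct [i,j,k]"
  shows "phiL_xy a b (cyc3 p q r) (cyc3 i j k) v1 v2 v3 = (\<lambda>z. Ps a b p q r i j k v1 v2 v3 * W a b p q r z)"
  using assms by (simp add: phiL_xy_def kappaL_cyc3 pact_cyc3 vadd_def Om_smul Ps_def fun_eq_iff algebra_simps)

lemma phiC_xy_cyc3: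
  assumes "distinct [p,q,r]" "distinct [i,j,k]"
  shows "phiC_xy a b c (cyc3 p q r) (cyc3 i j k) v1 v2 v3 = c * Ps a b p q r i j k v1 v2 v3"
  using assms by (simp add: phiC_xy_def kappaC_cyc3 kappaL_cyc3 pact_cyc3 vadd_def Om_smul Ps_def algebra_simps)

lemma kappaL_zero: "kappaL a b x u (\<lambda>z. 0) = (\<lambda>z. 0)" by (simp add: kappaL_def)
lemma kappaC_zero: "kappaC c x u (\<lambda>z. 0) = 0" by (simp add: kappaC_def)

lemma phiL_xy_non3: "\<not> (is_3cycle x \<and> is_3cycle y) \<Longrightarrow> phiL_xy a b x y v1 v2 v3 = (\<lambda>z. 0)"
  by (auto simp: phiL_xy_def kappaL_non3 vadd_def kappaL_zero)

lemma phiC_xy_non3: "\<not> (is_3cycle x \<and> is_3cycle y) \<Longrightarrow> phiC_xy a b c x y v1 v2 v3 = 0"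
  by (auto simp: phiC_xy_def kappaC_non3 kappaL_non3 kappaC_zero)

lemma neq_at2: "f u \<noteq> g u \<or> f w \<noteq> g w \<Longrightarrow> f \<noteq> g" by auto

lemma dist5: "distinct [d0,d1,d2,d3,d4] \<Longrightarrow>
  d0 \<noteq> d1 \<and> d0 \<noteq> d2 \<and> d0 \<noteq> d3 \<and> d0 \<noteq> d4 \<and> d1 \<noteq> d2 \<and> d1 \<noteq> d3 \<and> d1 \<noteq> d4 \<and>
  d2 \<noteq> d3 \<and> d2 \<noteq> d4 \<and> d3 \<noteq> d4 \<and>
  d1 \<noteq> d0 \<and> d2 \<noteq> d0 \<and> d3 \<noteq> d0 \<and> d4 \<noteq> d0 \<and> d2 \<noteq> d1 \<and> d3 \<noteq> d1 \<and> d4 \<noteq> d1 \<and>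
  d3 \<noteq> d2 \<and> d4 \<noteq> d2 \<and> d4 \<noteq> d3" by auto

lemma sum_fact:
  fixes F :: "('n::finite \<Rightarrow> 'n) \<Rightarrow> ('n \<Rightarrow> 'n) \<Rightarrow> 'b::comm_monoid_add"
  assumes dd: "distinct [d0,d1,d2,d3,d4]"
    and F0: "\<And>x y. \<not> (is_3cycle x \<and> is_3cycle y) \<Longrightarrow> F x y = 0"
  shows "(\<Sum>(x,y)\<in>factorizations (cyc5 d0 d1 d2 d3 d4). F x y) =
    F (cyc3 d3 d4 d0) (cyc3 d0 d1 d2) + F (cyc3 d4 d0 d1) (cyc3 d1 d2 d3) +
    F (cyc3 d0 d1 d2) (cyc3 d2 d3 d4) + F (cyc3 d1 d2 d3) (cyc3 d3 d4 d0) +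
    F (cyc3 d2 d3 d4) (cyc3 d4 d0 d1)"
proof -
  note dn = dist5[OF dd]
  define L where "L = [(cyc3 d3 d4 d0, cyc3 d0 d1 d2), (cyc3 d4 d0 d1, cyc3 d1 d2 d3),
     (cyc3 d0 d1 d2, cyc3 d2 d3 d4), (cyc3 d1 d2 d3, cyc3 d3 d4 d0), (cyc3 d2 d3 d4, cyc3 d4 d0 d1)]"
  have sub: "set L \<subseteq> factorizations (cyc5 d0 d1 d2 d3 d4)"
    unfolding L_def factorizations_def using dn
    by (simp add: cyc3_permutes, auto simp: fun_eq_iff cyc3_def cyc5_def)
  have "(\<Sum>(x,y)\<in>factorizations (cyc5 d0 d1 d2 d3 d4). F x y) = (\<Sum>(x,y)\<in>set L. F x y)"
  proof (rule sum.mono_neutral_right)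
    show "finite (factorizations (cyc5 d0 d1 d2 d3 d4))" by simp
    show "set L \<subseteq> factorizations (cyc5 d0 d1 d2 d3 d4)" by (rule sub)
    show "\<forall>i\<in>factorizations (cyc5 d0 d1 d2 d3 d4) - set L. (case i of (x, y) \<Rightarrow> F x y) = 0"
    proof (clarify)
      fix x y assume xy: "(x,y) \<in> factorizations (cyc5 d0 d1 d2 d3 d4)" "(x,y) \<notin> set L"
      show "F x y = 0"
      proof (cases "is_3cycle x \<and> is_3cycle y")
        case True
        then have "(x,y) \<in> set L" using classify[OF dd, of x y] xy(1)
          unfolding L_def factorizations_def by auto
        then show ?thesis using xy(2) by simp
      qed (rule F0)
    qed
  qed
  also have "\<dots> = sum_list (map (\<lambda>(x,y). F x y) L)"
  proof (rule sum.distinct_set_conv_list)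
    have "distinct (map snd L)" unfolding L_def
      using dn by (auto simp: cyc3_def intro!: neq_at2[of _ d0 _ d1] neq_at2[of _ d0 _ d2]
          neq_at2[of _ d0 _ d3] neq_at2[of _ d0 _ d4] neq_at2[of _ d1 _ d2] neq_at2[of _ d1 _ d3]
          neq_at2[of _ d1 _ d4] neq_at2[of _ d2 _ d3] neq_at2[of _ d2 _ d4] neq_at2[of _ d3 _ d4])
    then show "distinct L" by (simp add: distinct_map)
  qed
  also have "\<dots> = F (cyc3 d3 d4 d0) (cyc3 d0 d1 d2) + F (cyc3 d4 d0 d1) (cyc3 d1 d2 d3) +
    F (cyc3 d0 d1 d2) (cyc3 d2 d3 d4) + F (cyc3 d1 d2 d3) (cyc3 d3 d4 d0) +
    F (cyc3 d2 d3 d4) (cyc3 d4 d0 d1)" by (simp add: L_def add.assoc)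
  finally show ?thesis .
qed

lemma phiL_expl:
  assumes dd: "distinct [d0,d1,d2,d3,d4]"
  shows "phiL a b (cyc5 d0 d1 d2 d3 d4) v1 v2 v3 = (\<lambda>z.
      Ps a b d3 d4 d0 d0 d1 d2 v1 v2 v3 * W a b d3 d4 d0 z
    + Ps a b d4 d0 d1 d1 d2 d3 v1 v2 v3 * W a b d4 d0 d1 z
    + Ps a b d0 d1 d2 d2 d3 d4 v1 v2 v3 * W a b d0 d1 d2 z
    + Ps a b d1 d2 d3 d3 d4 d0 v1 v2 v3 * W a b d1 d2 d3 z
    + Ps a b d2 d3 d4 d4 d0 d1 v1 v2 v3 * W a b d2 d3 d4 z)"
proof
  fix z
  note dn = dist5[OF dd]
  have "phiL a b (cyc5 d0 d1 d2 d3 d4) v1 v2 v3 z =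
     (\<Sum>(x,y)\<in>factorizations (cyc5 d0 d1 d2 d3 d4). phiL_xy a b x y v1 v2 v3 z)"
    by (simp add: phiL_def)
  also have "\<dots> = phiL_xy a b (cyc3 d3 d4 d0) (cyc3 d0 d1 d2) v1 v2 v3 z + phiL_xy a b (cyc3 d4 d0 d1) (cyc3 d1 d2 d3) v1 v2 v3 z + phiL_xy a b (cyc3 d0 d1 d2) (cyc3 d2 d3 d4) v1 v2 v3 z + phiL_xy a b (cyc3 d1 d2 d3) (cyc3 d3 d4 d0) v1 v2 v3 z + phiL_xy a b (cyc3 d2 d3 d4) (cyc3 d4 d0 d1) v1 v2 v3 z"
    by (rule sum_fact[OF dd]) (simp add: phiL_xy_non3)
  finally show "phiL a b (cyc5 d0 d1 d2 d3 d4) v1 v2 v3 z = Ps a b d3 d4 d0 d0 d1 d2 v1 v2 v3 * W a b d3 d4 d0 z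
    + Ps a b d4 d0 d1 d1 d2 d3 v1 v2 v3 * W a b d4 d0 d1 z
    + Ps a b d0 d1 d2 d2 d3 d4 v1 v2 v3 * W a b d0 d1 d2 z
    + Ps a b d1 d2 d3 d3 d4 d0 v1 v2 v3 * W a b d1 d2 d3 z
    + Ps a b d2 d3 d4 d4 d0 d1 v1 v2 v3 * W a b d2 d3 d4 z"
    using dn by (simp add: phiL_xy_cyc3)
qed

lemma phiC_expl:
  assumes dd: "distinct [d0,d1,d2,d3,d4]"
  shows "phiC a b c (cyc5 d0 d1 d2 d3 d4) v1 v2 v3 = c * (
      Ps a b d3 d4 d0 d0 d1 d2 v1 v2 v3
    + Ps a b d4 d0 d1 d1 d2 d3 v1 v2 v3
    + Ps a b d0 d1 d2 d2 d3 d4 v1 v2 v3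
    + Ps a b d1 d2 d3 d3 d4 d0 v1 v2 v3
    + Ps a b d2 d3 d4 d4 d0 d1 v1 v2 v3)"
proof -
  note dn = dist5[OF dd]
  have "phiC a b c (cyc5 d0 d1 d2 d3 d4) v1 v2 v3 =
     (\<Sum>(x,y)\<in>factorizations (cyc5 d0 d1 d2 d3 d4). phiC_xy a b c x y v1 v2 v3)"
    by (simp add: phiC_def)
  also have "\<dots> = phiC_xy a b c (cyc3 d3 d4 d0) (cyc3 d0 d1 d2) v1 v2 v3 + phiC_xy a b c (cyc3 d4 d0 d1) (cyc3 d1 d2 d3) v1 v2 v3 + phiC_xy a b c (cyc3 d0 d1 d2) (cyc3 d2 d3 d4) v1 v2 v3 + phiC_xy a b c (cyc3 d1 d2 d3) (cyc3 d3 d4 d0) v1 v2 v3 + phiC_xy a b c (cyc3 d2 d3 d4) (cyc3 d4 d0 d1) v1 v2 v3"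
    by (rule sum_fact[OF dd]) (simp add: phiC_xy_non3)
  finally show ?thesis
    using dn by (simp add: phiC_xy_cyc3 algebra_simps)
qed

lemma phiC_zero:
  assumes dd: "distinct [d0,d1,d2,d3,d4]"
  shows "phiC a b c (cyc5 d0 d1 d2 d3 d4) v1 v2 v3 = 0"
proof -
  note dn = dist5[OF dd]
  show ?thesis unfolding phiC_expl[OF dd] using dn
    by (simp add: Ps_def Om_def cyc3_def W_def algebra_simps)
qed

lemma claim2:
  assumes dd: "distinct [d0,d1,d2,d3,d4]" and i: "i \<notin> {d0,d1,d2,d3,d4}"
  shows "phiL a b (cyc5 d0 d1 d2 d3 d4) (basis i) (basis j) (basis k) = (\<lambda>p. 0)"
proof -
  note dn = dist5[OF dd]
  have "i \<noteq> d0 \<and> i \<noteq> d1 \<and> i \<noteq> d2 \<and> i \<noteq> d3 \<and> i \<noteq> d4 \<and> d0 \<noteq> i \<and> d1 \<noteq> i \<and> d2 \<noteq> i \<and> d3 \<noteq> i \<and> d4 \<noteq> i"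
    using i by auto
  then show ?thesis unfolding phiL_expl[OF dd] using dn
    by (simp add: Ps_def Om_def cyc3_def basis_def)
qed

lemma claim3:
  assumes dd: "distinct [d0,d1,d2,d3,d4]"
  shows "phiL a b (cyc5 d0 d1 d2 d3 d4) (basis d0) (basis d1) (basis d2) =
     smul (2 * (a - b)^2) (vsub (vsub (vadd (basis d0) (basis d1)) (basis d2)) (basis d3))"
proof
  fix z
  note dn = dist5[OF dd]
  have "z = d0 \<or> z = d1 \<or> z = d2 \<or> z = d3 \<or> z = d4 \<or> (z \<noteq> d0 \<and> z \<noteq> d1 \<and> z \<noteq> d2 \<and> z \<noteq> d3 \<and> z \<noteq> d4)"
    by auto
  then show "phiL a b (cyc5 d0 d1 d2 d3 d4) (basis d0) (basis d1) (basis d2) z =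
     smul (2 * (a - b)^2) (vsub (vsub (vadd (basis d0) (basis d1)) (basis d2)) (basis d3)) z"
    unfolding phiL_expl[OF dd] using dn
    by (elim disjE; simp add: Ps_def Om_def cyc3_def basis_def W_def smul_def vsub_def vadd_def
        algebra_simps power2_eq_square)
qed

lemma claim4:
  assumes dd: "distinct [d0,d1,d2,d3,d4]"
  shows "phiL a b (cyc5 d0 d1 d2 d3 d4) (basis d0) (basis d1) (basis d3) =
     smul (2 * (a - b)^2) (vsub (vadd (vadd (smul (-2) (basis d0)) (smul 2 (basis d2))) (basis d3)) (basis d4))"
proof
  fix z
  note dn = dist5[OF dd]
  have "z = d0 \<or> z = d1 \<or> z = d2 \<or> z = d3 \<or> z = d4 \<or> (z \<noteq> d0 \<and> z \<noteq> d1 \<and> z \<noteq> d2 \<and> z \<noteq> d3 \<and> z \<noteq> d4)"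
    by auto
  then show "phiL a b (cyc5 d0 d1 d2 d3 d4) (basis d0) (basis d1) (basis d3) z =
     smul (2 * (a - b)^2) (vsub (vadd (vadd (smul (-2) (basis d0)) (smul 2 (basis d2))) (basis d3)) (basis d4)) z"
    unfolding phiL_expl[OF dd] using dn
    by (elim disjE; simp add: Ps_def Om_def cyc3_def basis_def W_def smul_def vsub_def vadd_def
        algebra_simps power2_eq_square)
qed

lemma cyc5_perm: "distinct [d0,d1,d2,d3,d4] \<Longrightarrow> cyc5 d0 d1 d2 d3 d4 permutes UNIV"
  by (metis cyc5_eq cycle_permutes permutes_subset subset_UNIV)

lemma cyc5_pow_bij: "distinct [d0,d1,d2,d3,d4] \<Longrightarrow> bij (cyc5 d0 d1 d2 d3 d4 ^^ n)"
  by (intro permutes_bij[of _ UNIV] permutes_funpow cyc5_perm)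

lemma cyc5_rot: "distinct [d0,d1,d2,d3,d4] \<Longrightarrow> cyc5 d0 d1 d2 d3 d4 = cyc5 d1 d2 d3 d4 d0"
  by (auto simp: fun_eq_iff cyc5_def)

lemma cyc5_pows:
  assumes dd: "distinct [d0,d1,d2,d3,d4]"
  shows "(cyc5 d0 d1 d2 d3 d4 ^^ 1) d0 = d1" "(cyc5 d0 d1 d2 d3 d4 ^^ 2) d0 = d2"
    "(cyc5 d0 d1 d2 d3 d4 ^^ 3) d0 = d3" "(cyc5 d0 d1 d2 d3 d4 ^^ 4) d0 = d4"
  using dist5[OF dd] by (simp_all add: numeral_eq_Suc cyc5_def)

lemma C3p:
  assumes dd: "distinct [d0,d1,d2,d3,d4]"
  defines "G \<equiv> cyc5 d0 d1 d2 d3 d4"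
  shows "phiL a b G (basis d0) (pact G (basis d0)) (pact (G ^^ 2) (basis d0)) =
           smul (2 * (a - b)^2)
             (vsub (vsub (vadd (basis d0) (pact G (basis d0))) (pact (G ^^ 2) (basis d0)))
                   (pact (G ^^ 3) (basis d0)))"
    "phiL a b G (basis d0) (pact G (basis d0)) (pact (G ^^ 3) (basis d0)) =
           smul (2 * (a - b)^2)
             (vsub (vadd (vadd (smul (-2) (basis d0)) (smul 2 (pact (G ^^ 2) (basis d0))))
                         (pact (G ^^ 3) (basis d0)))
                   (pact (G ^^ 4) (basis d0)))"
proof -
  have pb: "pact (G ^^ n) (basis i) = basis ((G ^^ n) i)" for n i
    unfolding G_def by (rule pact_basis[OF cyc5_pow_bij[OF dd]])
  have pb1: "pact G (basis i) = basis (G i)" for i using pb[of 1 i] by simp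
  have g1: "G d0 = d1" using cyc5_pows(1)[OF dd] unfolding G_def by simp
  show "phiL a b G (basis d0) (pact G (basis d0)) (pact (G ^^ 2) (basis d0)) =
           smul (2 * (a - b)^2)
             (vsub (vsub (vadd (basis d0) (pact G (basis d0))) (pact (G ^^ 2) (basis d0)))
                   (pact (G ^^ 3) (basis d0)))"
    unfolding pb pb1 g1 using claim3[OF dd] cyc5_pows[OF dd] unfolding G_def by simp
  show "phiL a b G (basis d0) (pact G (basis d0)) (pact (G ^^ 3) (basis d0)) =
           smul (2 * (a - b)^2)
             (vsub (vadd (vadd (smul (-2) (basis d0)) (smul 2 (pact (G ^^ 2) (basis d0))))
                         (pact (G ^^ 3) (basis d0)))
                   (pact (G ^^ 4) (basis d0)))"
    unfolding pb pb1 g1 using claim4[OF dd] cyc5_pows[OF dd] unfolding G_def by simp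
qed

theorem proposition7p3:
  fixes a b c :: complex and g :: "'n::finite \<Rightarrow> 'n"
  assumes "card (UNIV :: 'n set) \<ge> 3"
    and "is_5cycle g"
  shows "(\<forall>v1 v2 v3. phiC a b c g v1 v2 v3 = 0)
    \<and> (\<forall>i j k. pact g (basis i) = basis i \<longrightarrow> phiL a b g (basis i) (basis j) (basis k) = (\<lambda>p. 0))
    \<and> (\<forall>i. phiL a b g (basis i) (pact g (basis i)) (pact (g ^^ 2) (basis i)) =
           smul (2 * (a - b)^2)
             (vsub (vsub (vadd (basis i) (pact g (basis i))) (pact (g ^^ 2) (basis i)))
                   (pact (g ^^ 3) (basis i))))
    \<and> (\<forall>i. phiL a b g (basis i) (pact g (basis i)) (pact (g ^^ 3) (basis i)) =
           smul (2 * (a - b)^2)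
             (vsub (vadd (vadd (smul (-2) (basis i)) (smul 2 (pact (g ^^ 2) (basis i))))
                         (pact (g ^^ 3) (basis i)))
                   (pact (g ^^ 4) (basis i))))"
proof -
  obtain cs where cs: "length cs = 5" "distinct cs" "g = cycle_of_list cs"
    using assms(2) unfolding is_5cycle_def by blast
  obtain d0 d1 d2 d3 d4 where cse: "cs = [d0,d1,d2,d3,d4]"
    using cs(1) by (auto simp: numeral_eq_Suc length_Suc_conv)
  have dd: "distinct [d0,d1,d2,d3,d4]" using cs cse by simp
  have gG: "g = cyc5 d0 d1 d2 d3 d4" using cs cse cyc5_eq[OF dd] by simp
  have dd1: "distinct [d1,d2,d3,d4,d0]" and dd2: "distinct [d2,d3,d4,d0,d1]"
    and dd3: "distinct [d3,d4,d0,d1,d2]" and dd4: "distinct [d4,d0,d1,d2,d3]" using dd by auto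
  have r1: "g = cyc5 d1 d2 d3 d4 d0" using gG cyc5_rot[OF dd] by simp
  have r2: "g = cyc5 d2 d3 d4 d0 d1" using r1 cyc5_rot[OF dd1] by simp
  have r3: "g = cyc5 d3 d4 d0 d1 d2" using r2 cyc5_rot[OF dd2] by simp
  have r4: "g = cyc5 d4 d0 d1 d2 d3" using r3 cyc5_rot[OF dd3] by simp
  have pbg: "pact (g ^^ n) (basis i) = basis ((g ^^ n) i)" for n i
    unfolding gG by (rule pact_basis[OF cyc5_pow_bij[OF dd]])
  have fix_pow: "(g ^^ n) i = i" if "g i = i" for n i using that by (induct n) auto
  have movedD: "g i \<noteq> i \<Longrightarrow> i \<in> {d0,d1,d2,d3,d4}" for i
    unfolding gG by (auto simp: cyc5_def split: if_splits)
  have P2: "phiL a b g (basis i) (basis j) (basis k) = (\<lambda>p. 0)" if "g i = i" for i j k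
  proof -
    have "i \<notin> {d0,d1,d2,d3,d4}" using that dist5[OF dd] unfolding gG by (auto simp: cyc5_def)
    then show ?thesis using claim2[OF dd, of i] gG by simp
  qed
  have basis_inj: "basis u = basis v \<Longrightarrow> u = v" for u v :: 'n
    unfolding basis_def by (metis fun_cong one_neq_zero)
  have P34: "phiL a b g (basis i) (pact g (basis i)) (pact (g ^^ 2) (basis i)) =
           smul (2 * (a - b)^2)
             (vsub (vsub (vadd (basis i) (pact g (basis i))) (pact (g ^^ 2) (basis i)))
                   (pact (g ^^ 3) (basis i)))
     \<and> phiL a b g (basis i) (pact g (basis i)) (pact (g ^^ 3) (basis i)) =
           smul (2 * (a - b)^2)
             (vsub (vadd (vadd (smul (-2) (basis i)) (smul 2 (pact (g ^^ 2) (basis i))))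
                         (pact (g ^^ 3) (basis i)))
                   (pact (g ^^ 4) (basis i)))" for i
  proof (cases "g i = i")
    case True
    have e: "pact (g ^^ n) (basis i) = basis i" for n using pbg fix_pow[OF True] by simp
    have e1: "pact g (basis i) = basis i" using e[of 1] by simp
    show ?thesis unfolding e e1 using P2[OF True]
      by (simp add: fun_eq_iff smul_def vsub_def vadd_def)
  next
    case False
    then have "i = d0 \<or> i = d1 \<or> i = d2 \<or> i = d3 \<or> i = d4" using movedD by auto
    then show ?thesis
    proof (elim disjE)
      assume "i = d0" then show ?thesis using C3p[OF dd] gG by simp
    next
      assume "i = d1" then show ?thesis using C3p[OF dd1] r1 by simp
    next
      assume "i = d2" then show ?thesis using C3p[OF dd2] r2 by simp
    next
      assume "i = d3" then show ?thesis using C3p[OF dd3] r3 by simp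
    next
      assume "i = d4" then show ?thesis using C3p[OF dd4] r4 by simp
    qed
  qed
  show ?thesis
  proof (intro conjI allI impI)
    fix v1 v2 v3 show "phiC a b c g v1 v2 v3 = 0" unfolding gG by (rule phiC_zero[OF dd])
  next
    fix i j k assume "pact g (basis i) = basis i"
    then have "g i = i" using pbg[of 1 i] basis_inj by simp
    then show "phiL a b g (basis i) (basis j) (basis k) = (\<lambda>p. 0)" by (rule P2)
  qed (use P34 in blast)+
qed

end
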